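(* Let $\otimes$ and $\oplus$ be uninorms on $[0,1]$. If $\otimes$ satisfies property $B$ and $\oplus$ satisfies property $A'$, then $(\otimes,\oplus)$ satisfies the rearrangement inequality.
   Context: A uninorm is a function $\otimes:[0,1]^2\to[0,1]$ that is commutative, associative, monotonic ($x\leq y$ implies $x\otimes z\leq y\otimes z$), and has an identity element $e\in[0,1]$. A function $f$ (written $f(x,y)$ or $x\,f\,y$) satisfies property $B$ if for all $0\leq x\leq y\leq1$ and $0\leq z\leq w\leq 1$, $f(x,w)-f(x,z)\leq f(y,w)-f(y,z)$; property $A'$ if for all $0\leq x\leq y\leq z\leq w\leq 1$, $w+x\geq y+z$ implies $f(x,w)\geq f(y,z)$. The pair $(\otimes,\oplus)$ satisfies the rearrangement inequality if for every $n\geq1$, all $0\leq x_1\leq\cdots\leq x_n\leq 1$, $0\leq y_1\leq\cdots\leq y_n\leq 1$ and every permutation $\sigma$ of $\{1,\dots,n\}$, $$(x_n\otimes y_1)\oplus\cdots\oplus(x_1\otimes y_n)\leq (x_{\sigma(1)}\otimes y_1)\oplus\cdots\oplus(x_{\sigma(n)}\otimes y_n)\leq (x_1\otimes y_1)\oplus\cdots\oplus(x_n\otimes y_n).$$ *)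

theory Defs
  imports Main "HOL-Combinatorics.Permutations" "HOL.Real"
begin

definition uninorm :: "(real \<Rightarrow> real \<Rightarrow> real) \<Rightarrow> bool" where
  "uninorm f \<longleftrightarrow>
     (\<forall>x\<in>{0..1}. \<forall>y\<in>{0..1}. f x y \<in> {0..1}) \<and>
     (\<forall>x\<in>{0..1}. \<forall>y\<in>{0..1}. f x y = f y x) \<and>
     (\<forall>x\<in>{0..1}. \<forall>y\<in>{0..1}. \<forall>z\<in>{0..1}. f (f x y) z = f x (f y z)) \<and>
     (\<forall>x\<in>{0..1}. \<forall>y\<in>{0..1}. \<forall>z\<in>{0..1}. x \<le> y \<longrightarrow> f x z \<le> f y z) \<and>
     (\<exists>e\<in>{0..1}. \<forall>x\<in>{0..1}. f e x = x)"

definition property_B :: "(real \<Rightarrow> real \<Rightarrow> real) \<Rightarrow> bool" where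
  "property_B f \<longleftrightarrow>
     (\<forall>x y z w. 0 \<le> x \<and> x \<le> y \<and> y \<le> 1 \<and> 0 \<le> z \<and> z \<le> w \<and> w \<le> 1 \<longrightarrow>
        f x w - f x z \<le> f y w - f y z)"

definition property_A' :: "(real \<Rightarrow> real \<Rightarrow> real) \<Rightarrow> bool" where
  "property_A' f \<longleftrightarrow>
     (\<forall>x y z w. 0 \<le> x \<and> x \<le> y \<and> y \<le> z \<and> z \<le> w \<and> w \<le> 1 \<longrightarrow>
        w + x \<ge> y + z \<longrightarrow> f x w \<ge> f y z)"

definition bigop :: "(real \<Rightarrow> real \<Rightarrow> real) \<Rightarrow> (nat \<Rightarrow> real) \<Rightarrow> nat \<Rightarrow> real" where
  "bigop f a n = foldl f (a 1) (map a [2..<n+1])"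

definition rearrangement_ineq ::
  "(real \<Rightarrow> real \<Rightarrow> real) \<Rightarrow> (real \<Rightarrow> real \<Rightarrow> real) \<Rightarrow> bool" where
  "rearrangement_ineq otimes oplus \<longleftrightarrow>
     (\<forall>n::nat. \<forall>x y :: nat \<Rightarrow> real. \<forall>\<sigma>.
        n \<ge> 1 \<longrightarrow>
        (\<forall>i\<in>{1..n}. 0 \<le> x i \<and> x i \<le> 1 \<and> 0 \<le> y i \<and> y i \<le> 1) \<longrightarrow>
        (\<forall>i\<in>{1..n}. \<forall>j\<in>{1..n}. i \<le> j \<longrightarrow> x i \<le> x j \<and> y i \<le> y j) \<longrightarrow>
        \<sigma> permutes {1..n} \<longrightarrow>
        bigop oplus (\<lambda>i. otimes (x (n + 1 - i)) (y i)) n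
          \<le> bigop oplus (\<lambda>i. otimes (x (\<sigma> i)) (y i)) n \<and>
        bigop oplus (\<lambda>i. otimes (x (\<sigma> i)) (y i)) n
          \<le> bigop oplus (\<lambda>i. otimes (x i) (y i)) n)"

end

theory Submission
  imports Defs
begin

lemma uninormD:
  assumes "uninorm f"
  shows "\<And>x y. x\<in>{0..1} \<Longrightarrow> y\<in>{0..1} \<Longrightarrow> f x y \<in> {0..1}"
    and "\<And>x y. x\<in>{0..1} \<Longrightarrow> y\<in>{0..1} \<Longrightarrow> f x y = f y x"
    and "\<And>x y z. x\<in>{0..1} \<Longrightarrow> y\<in>{0..1} \<Longrightarrow> z\<in>{0..1} \<Longrightarrow> f (f x y) z = f x (f y z)"
    and "\<And>x y z. x\<in>{0..1} \<Longrightarrow> y\<in>{0..1} \<Longrightarrow> z\<in>{0..1} \<Longrightarrow> x \<le> y \<Longrightarrow> f x z \<le> f y z"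
  using assms unfolding uninorm_def by blast+

lemma uninorm_mono2:
  assumes "uninorm f" "x\<in>{0..1}" "y\<in>{0..1}" "z\<in>{0..1}" "y \<le> z"
  shows "f x y \<le> f x z"
  using uninormD(2,4)[OF assms(1)] assms(2-5) by metis

lemma pair_ineq:
  assumes U1: "uninorm ot" and U2: "uninorm op'" and PB: "property_B ot" and PA: "property_A' op'"
    and ab: "a\<in>{0..1}" "b\<in>{0..1}" "c\<in>{0..1}" "d\<in>{0..1}" "a \<le> b" "c \<le> d"
  shows "op' (ot b c) (ot a d) \<le> op' (ot a c) (ot b d)"
proof -
  define p q r s where "p = ot a c" and "q = ot b c" and "r = ot a d" and "s = ot b d"
  have R: "p\<in>{0..1}" "q\<in>{0..1}" "r\<in>{0..1}" "s\<in>{0..1}"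
    using uninormD(1)[OF U1] ab unfolding p_def q_def r_def s_def by auto
  have "p \<le> q" unfolding p_def q_def using uninormD(4)[OF U1] ab by auto
  moreover have "p \<le> r" unfolding p_def r_def using uninorm_mono2[OF U1] ab by auto
  moreover have "q \<le> s" unfolding q_def s_def using uninorm_mono2[OF U1] ab by auto
  moreover have "r \<le> s" unfolding r_def s_def using uninormD(4)[OF U1] ab by auto
  moreover have "ot a d - ot a c \<le> ot b d - ot b c"
    using PB ab unfolding property_B_def by auto
  hence "q + r \<le> p + s" unfolding p_def q_def r_def s_def by linarith
  ultimately have "op' q r \<le> op' p s"
  proof (cases "q \<le> r")
    case True
    then show ?thesis using PA R \<open>p \<le> q\<close> \<open>r \<le> s\<close> \<open>q + r \<le> p + s\<close>
      unfolding property_A'_def by auto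
  next
    case False
    then have "op' r q \<le> op' p s" using PA R \<open>p \<le> r\<close> \<open>q \<le> s\<close> \<open>q + r \<le> p + s\<close>
      unfolding property_A'_def by auto
    then show ?thesis using uninormD(2)[OF U2] R by metis
  qed
  then show ?thesis unfolding p_def q_def r_def s_def .
qed


locale RI =
  fixes otimes oplus :: "real \<Rightarrow> real \<Rightarrow> real"
  assumes U1: "uninorm otimes" and U2: "uninorm oplus"
    and PB: "property_B otimes" and PA: "property_A' oplus"
begin

definition cl :: "real \<Rightarrow> real" where "cl x = max 0 (min 1 x)"

definition h :: "real \<Rightarrow> real \<Rightarrow> real" where
  "h x y = (if x = 2 then y else if y = 2 then x else oplus (cl x) (cl y))"

lemma cl_range: "cl x \<in> {0..1}" unfolding cl_def by auto
lemma cl_id: "x \<in> {0..1} \<Longrightarrow> cl x = x" unfolding cl_def by auto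

lemma h_range: "x \<noteq> 2 \<Longrightarrow> y \<noteq> 2 \<Longrightarrow> h x y \<in> {0..1}"
  unfolding h_def using uninormD(1)[OF U2] cl_range by auto

lemma h_eq: "x \<in> {0..1} \<Longrightarrow> y \<in> {0..1} \<Longrightarrow> h x y = oplus x y"
  unfolding h_def using cl_id by auto

lemma h_comm_monoid: "comm_monoid h 2"
proof
  fix a b c
  show "h (h a b) c = h a (h b c)"
  proof (cases "a = 2 \<or> b = 2 \<or> c = 2")
    case True
    then show ?thesis unfolding h_def by auto
  next
    case False
    then have ne: "a \<noteq> 2" "b \<noteq> 2" "c \<noteq> 2" by auto
    have r1: "h a b \<in> {0..1}" "h b c \<in> {0..1}" using h_range ne by auto
    then have n1: "h a b \<noteq> 2" "h b c \<noteq> 2" by auto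
    have "h (h a b) c = oplus (oplus (cl a) (cl b)) (cl c)"
      using n1 ne r1 cl_id unfolding h_def[of "h a b" c] by (simp add: h_def)
    also have "\<dots> = oplus (cl a) (oplus (cl b) (cl c))"
      using uninormD(3)[OF U2] cl_range by auto
    also have "\<dots> = h a (h b c)"
      using n1 ne r1 cl_id unfolding h_def[of a "h b c"] by (simp add: h_def)
    finally show ?thesis .
  qed
next
  fix a b show "h a b = h b a" unfolding h_def using uninormD(2)[OF U2] cl_range by auto
next
  fix a show "h a 2 = a" unfolding h_def by auto
qed

sublocale H: comm_monoid_set h 2
  by (rule comm_monoid_set.intro, rule h_comm_monoid)

lemma HF_range:
  assumes "finite A" "A \<noteq> {}" "\<And>i. i \<in> A \<Longrightarrow> t i \<in> {0..1}"
  shows "H.F t A \<in> {0..1}"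
  using assms
proof (induction A rule: finite_ne_induct)
  case (singleton x) then show ?case by simp
next
  case (insert x F)
  then have "t x \<in> {0..1}" "H.F t F \<in> {0..1}" by auto
  then show ?case using insert h_eq uninormD(1)[OF U2] by auto
qed

lemma HF_range2:
  assumes "finite A" "\<And>i. i \<in> A \<Longrightarrow> t i \<in> {0..1}"
  shows "H.F t A \<in> {0..1} \<or> H.F t A = 2"
  using HF_range[OF assms(1) _ assms(2)] by (cases "A = {}") auto

lemma bigop_HF:
  assumes "n \<ge> 1" "\<And>i. i \<in> {1..n} \<Longrightarrow> t i \<in> {0..1}"
  shows "bigop oplus t n = H.F t {1..n}"
  using assms
proof (induction n rule: nat_induct_at_least)
  case base
  then show ?case by (simp add: bigop_def)
next
  case (Suc n)
  have IH: "bigop oplus t n = H.F t {1..n}" using Suc by auto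
  have "bigop oplus t (Suc n) = oplus (bigop oplus t n) (t (Suc n))"
    unfolding bigop_def using \<open>n \<ge> 1\<close> by simp
  also have "\<dots> = oplus (t (Suc n)) (H.F t {1..n})"
    using IH HF_range[of "{1..n}" t] Suc uninormD(2)[OF U2] by auto
  also have "\<dots> = h (t (Suc n)) (H.F t {1..n})"
    using h_eq HF_range[of "{1..n}" t] Suc by auto
  also have "\<dots> = H.F t {1..Suc n}"
    by (simp add: atLeastAtMostSuc_conv)
  finally show ?case .
qed

lemma swap_le:
  assumes "finite A" "m \<in> A" "k \<in> A" "m \<noteq> k"
    and "\<And>i. i \<in> A \<Longrightarrow> t i \<in> {0..1}" "\<And>i. i \<in> A \<Longrightarrow> t' i \<in> {0..1}"
    and "\<And>i. i \<in> A \<Longrightarrow> i \<noteq> m \<Longrightarrow> i \<noteq> k \<Longrightarrow> t i = t' i"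
    and le: "oplus (t m) (t k) \<le> oplus (t' m) (t' k)"
  shows "H.F t A \<le> H.F t' A"
proof -
  define B where "B = A - {m} - {k}"
  have fB: "finite B" using assms unfolding B_def by auto
  have eqR: "H.F t B = H.F t' B" unfolding B_def
    by (rule H.cong) (use assms in auto)
  have dec: "H.F g A = h (h (g m) (g k)) (H.F g B)" for g
  proof -
    have "H.F g A = h (g m) (H.F g (A - {m}))" by (rule H.remove) (use assms in auto)
    also have "H.F g (A - {m}) = h (g k) (H.F g B)"
      unfolding B_def by (rule H.remove) (use assms in auto)
    finally show ?thesis by (simp only: H.assoc)
  qed
  have R: "H.F t B \<in> {0..1} \<or> H.F t B = 2" 
    by (rule HF_range2[OF fB]) (use assms in \<open>auto simp: B_def\<close>)
  have u: "h (t m) (t k) = oplus (t m) (t k)" "h (t' m) (t' k) = oplus (t' m) (t' k)"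
    using h_eq assms by auto
  have ur: "oplus (t m) (t k) \<in> {0..1}" "oplus (t' m) (t' k) \<in> {0..1}"
    using uninormD(1)[OF U2] assms by auto
  show ?thesis
  proof (cases "H.F t B = 2")
    case True
    have "h (oplus (t m) (t k)) 2 = oplus (t m) (t k)" "h (oplus (t' m) (t' k)) 2 = oplus (t' m) (t' k)"
      by (rule H.right_neutral)+
    then show ?thesis using dec[of t] dec[of t'] eqR u le True by metis
  next
    case False
    then have Rr: "H.F t B \<in> {0..1}" using R by auto
    have "h (oplus (t m) (t k)) (H.F t B) = oplus (oplus (t m) (t k)) (H.F t B)"
      using h_eq ur Rr by blast
    also have "\<dots> \<le> oplus (oplus (t' m) (t' k)) (H.F t B)"
      by (rule uninormD(4)[OF U2]) (use ur Rr le in auto)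
    also have "\<dots> = h (oplus (t' m) (t' k)) (H.F t B)"
      using h_eq ur Rr by metis
    finally show ?thesis using dec[of t] dec[of t'] eqR u by metis
  qed
qed


lemma upper_aux:
  fixes n k :: nat and x y :: "nat \<Rightarrow> real"
  assumes XY: "\<forall>i\<in>{1..n}. 0 \<le> x i \<and> x i \<le> 1 \<and> 0 \<le> y i \<and> y i \<le> 1"
    and MON: "\<forall>i\<in>{1..n}. \<forall>j\<in>{1..n}. i \<le> j \<longrightarrow> x i \<le> x j \<and> y i \<le> y j"
  shows "k \<le> n \<Longrightarrow> \<sigma> permutes {1..n} \<Longrightarrow> (\<forall>i. k < i \<and> i \<le> n \<longrightarrow> \<sigma> i = i) \<Longrightarrow>
    H.F (\<lambda>i. otimes (x (\<sigma> i)) (y i)) {1..n} \<le> H.F (\<lambda>i. otimes (x i) (y i)) {1..n}"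
proof (induction k arbitrary: \<sigma>)
  case 0
  then show ?case by (intro eq_refl H.cong) auto
next
  case (Suc k)
  define i where "i = Suc k"
  have iA: "i \<in> {1..n}" using Suc.prems unfolding i_def by auto
  have perm: "\<sigma> permutes {1..n}" by fact
  show ?case
  proof (cases "\<sigma> i = i")
    case True
    then have "\<forall>l. k < l \<and> l \<le> n \<longrightarrow> \<sigma> l = l" using Suc.prems unfolding i_def
      by (metis Suc_leI le_neq_implies_less)
    then show ?thesis using Suc by auto
  next
    case False
    define j where "j = inv \<sigma> i"
    have jA: "j \<in> {1..n}" unfolding j_def using permutes_in_image[OF permutes_inv[OF perm]] iA by auto
    have sj: "\<sigma> j = i" unfolding j_def using permutes_inverses(1)[OF perm] by auto
    have ji: "j \<noteq> i" using sj False by auto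
    have jlt: "j < i"
    proof (rule ccontr)
      assume "\<not> j < i"
      then have "Suc k < j" "j \<le> n" using ji jA unfolding i_def by auto
      then have "\<sigma> j = j" using Suc.prems by auto
      then show False using sj ji by auto
    qed
    have siA: "\<sigma> i \<in> {1..n}" using permutes_in_image[OF perm] iA by auto
    have silt: "\<sigma> i < i"
    proof (rule ccontr)
      assume "\<not> \<sigma> i < i"
      then have "Suc k < \<sigma> i" "\<sigma> i \<le> n" using False siA unfolding i_def by auto
      then have "\<sigma> (\<sigma> i) = \<sigma> i" using Suc.prems by auto
      then have "\<sigma> i = i" using permutes_inj[OF perm] by (auto dest: injD)
      then show False using False by auto
    qed
    define \<sigma>' where "\<sigma>' = \<sigma> \<circ> Transposition.transpose i j"
    have perm': "\<sigma>' permutes {1..n}" unfolding \<sigma>'_def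
      by (rule permutes_compose[OF permutes_swap_id[OF iA jA] perm])
    have s'i: "\<sigma>' i = i" unfolding \<sigma>'_def using sj by simp
    have s'j: "\<sigma>' j = \<sigma> i" unfolding \<sigma>'_def by simp
    have s'o: "\<And>l. l \<noteq> i \<Longrightarrow> l \<noteq> j \<Longrightarrow> \<sigma>' l = \<sigma> l" unfolding \<sigma>'_def by simp
    have fix': "\<forall>l. k < l \<and> l \<le> n \<longrightarrow> \<sigma>' l = l"
    proof (intro allI impI)
      fix l assume l: "k < l \<and> l \<le> n"
      show "\<sigma>' l = l"
      proof (cases "l = i")
        case True then show ?thesis using s'i by simp
      next
        case False
        then have "l \<noteq> j" "Suc k < l" using jlt l unfolding i_def by auto
        then show ?thesis using s'o False Suc.prems l by auto
      qed
    qed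
    have IH: "H.F (\<lambda>i. otimes (x (\<sigma>' i)) (y i)) {1..n} \<le> H.F (\<lambda>i. otimes (x i) (y i)) {1..n}"
      using Suc.IH[OF _ perm' fix'] Suc.prems by auto
    have xr: "\<And>l. l \<in> {1..n} \<Longrightarrow> x l \<in> {0..1}" "\<And>l. l \<in> {1..n} \<Longrightarrow> y l \<in> {0..1}"
      using XY by auto
    have step: "H.F (\<lambda>i. otimes (x (\<sigma> i)) (y i)) {1..n} \<le> H.F (\<lambda>i. otimes (x (\<sigma>' i)) (y i)) {1..n}"
    proof (rule swap_le[of _ j i])
      show "oplus (otimes (x (\<sigma> j)) (y j)) (otimes (x (\<sigma> i)) (y i))
          \<le> oplus (otimes (x (\<sigma>' j)) (y j)) (otimes (x (\<sigma>' i)) (y i))"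
        unfolding sj s'i s'j
        by (rule pair_ineq[OF U1 U2 PB PA]) (use xr siA iA jA MON silt jlt in auto)
    next
      fix l assume "l \<in> {1..n}"
      then show "otimes (x (\<sigma> l)) (y l) \<in> {0..1}"
        using uninormD(1)[OF U1] xr permutes_in_image[OF perm] by auto
    next
      fix l assume "l \<in> {1..n}"
      then show "otimes (x (\<sigma>' l)) (y l) \<in> {0..1}"
        using uninormD(1)[OF U1] xr permutes_in_image[OF perm'] by auto
    qed (use jA iA ji s'o in auto)
    show ?thesis using step IH by linarith
  qed
qed

lemma lower_aux:
  fixes n k :: nat and x y :: "nat \<Rightarrow> real"
  assumes XY: "\<forall>i\<in>{1..n}. 0 \<le> x i \<and> x i \<le> 1 \<and> 0 \<le> y i \<and> y i \<le> 1"
    and MON: "\<forall>i\<in>{1..n}. \<forall>j\<in>{1..n}. i \<le> j \<longrightarrow> x i \<le> x j \<and> y i \<le> y j"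
  shows "k \<le> n \<Longrightarrow> \<sigma> permutes {1..n} \<Longrightarrow> (\<forall>i. k < i \<and> i \<le> n \<longrightarrow> \<sigma> i = n + 1 - i) \<Longrightarrow>
    H.F (\<lambda>i. otimes (x (n + 1 - i)) (y i)) {1..n} \<le> H.F (\<lambda>i. otimes (x (\<sigma> i)) (y i)) {1..n}"
proof (induction k arbitrary: \<sigma>)
  case 0
  then show ?case by (intro eq_refl H.cong) auto
next
  case (Suc k)
  define i where "i = Suc k"
  have iA: "i \<in> {1..n}" using Suc.prems unfolding i_def by auto
  have perm: "\<sigma> permutes {1..n}" by fact
  have riA: "n + 1 - i \<in> {1..n}" using iA by auto
  show ?case
  proof (cases "\<sigma> i = n + 1 - i")
    case True
    then have "\<forall>l. k < l \<and> l \<le> n \<longrightarrow> \<sigma> l = n + 1 - l" using Suc.prems unfolding i_def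
      by (metis Suc_leI le_neq_implies_less)
    then show ?thesis using Suc by auto
  next
    case False
    define j where "j = inv \<sigma> (n + 1 - i)"
    have jA: "j \<in> {1..n}" unfolding j_def using permutes_in_image[OF permutes_inv[OF perm]] riA by auto
    have sj: "\<sigma> j = n + 1 - i" unfolding j_def using permutes_inverses(1)[OF perm] by auto
    have ji: "j \<noteq> i" using sj False by auto
    have jlt: "j < i"
    proof (rule ccontr)
      assume "\<not> j < i"
      then have "Suc k < j" "j \<le> n" using ji jA unfolding i_def by auto
      then have "\<sigma> j = n + 1 - j" using Suc.prems by auto
      then show False using sj ji jA iA by auto
    qed
    have siA: "\<sigma> i \<in> {1..n}" using permutes_in_image[OF perm] iA by auto
    have silt: "n + 1 - i < \<sigma> i"
    proof (rule ccontr)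
      assume a: "\<not> n + 1 - i < \<sigma> i"
      define l where "l = n + 1 - \<sigma> i"
      have "Suc k < l" "l \<le> n" using a False siA iA unfolding i_def l_def by auto
      then have "\<sigma> l = n + 1 - l" using Suc.prems by auto
      also have "\<dots> = \<sigma> i" using siA unfolding l_def by auto
      finally have "l = i" using permutes_inj[OF perm] by (auto dest: injD)
      then show False using False siA unfolding l_def by auto
    qed
    define \<sigma>' where "\<sigma>' = \<sigma> \<circ> Transposition.transpose i j"
    have perm': "\<sigma>' permutes {1..n}" unfolding \<sigma>'_def
      by (rule permutes_compose[OF permutes_swap_id[OF iA jA] perm])
    have s'i: "\<sigma>' i = n + 1 - i" unfolding \<sigma>'_def using sj by simp
    have s'j: "\<sigma>' j = \<sigma> i" unfolding \<sigma>'_def by simp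
    have s'o: "\<And>l. l \<noteq> i \<Longrightarrow> l \<noteq> j \<Longrightarrow> \<sigma>' l = \<sigma> l" unfolding \<sigma>'_def by simp
    have fix': "\<forall>l. k < l \<and> l \<le> n \<longrightarrow> \<sigma>' l = n + 1 - l"
    proof (intro allI impI)
      fix l assume l: "k < l \<and> l \<le> n"
      show "\<sigma>' l = n + 1 - l"
      proof (cases "l = i")
        case True then show ?thesis using s'i by simp
      next
        case False
        then have "l \<noteq> j" "Suc k < l" using jlt l unfolding i_def by auto
        then show ?thesis using s'o False Suc.prems l by auto
      qed
    qed
    have IH: "H.F (\<lambda>i. otimes (x (n + 1 - i)) (y i)) {1..n} \<le> H.F (\<lambda>i. otimes (x (\<sigma>' i)) (y i)) {1..n}"
      using Suc.IH[OF _ perm' fix'] Suc.prems by auto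
    have xr: "\<And>l. l \<in> {1..n} \<Longrightarrow> x l \<in> {0..1}" "\<And>l. l \<in> {1..n} \<Longrightarrow> y l \<in> {0..1}"
      using XY by auto
    have step: "H.F (\<lambda>i. otimes (x (\<sigma>' i)) (y i)) {1..n} \<le> H.F (\<lambda>i. otimes (x (\<sigma> i)) (y i)) {1..n}"
    proof (rule swap_le[of _ j i])
      show "oplus (otimes (x (\<sigma>' j)) (y j)) (otimes (x (\<sigma>' i)) (y i))
          \<le> oplus (otimes (x (\<sigma> j)) (y j)) (otimes (x (\<sigma> i)) (y i))"
        unfolding sj s'i s'j
        by (rule pair_ineq[OF U1 U2 PB PA]) (use xr siA riA iA jA MON silt jlt in auto)
    next
      fix l assume "l \<in> {1..n}"
      then show "otimes (x (\<sigma> l)) (y l) \<in> {0..1}"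
        using uninormD(1)[OF U1] xr permutes_in_image[OF perm] by auto
    next
      fix l assume "l \<in> {1..n}"
      then show "otimes (x (\<sigma>' l)) (y l) \<in> {0..1}"
        using uninormD(1)[OF U1] xr permutes_in_image[OF perm'] by auto
    qed (use jA iA ji s'o in auto)
    show ?thesis using step IH by linarith
  qed
qed

lemma main: "rearrangement_ineq otimes oplus"
  unfolding rearrangement_ineq_def
proof (intro allI impI)
  fix n :: nat and x y :: "nat \<Rightarrow> real" and \<sigma>
  assume n: "1 \<le> n" and XY: "\<forall>i\<in>{1..n}. 0 \<le> x i \<and> x i \<le> 1 \<and> 0 \<le> y i \<and> y i \<le> 1"
    and MON: "\<forall>i\<in>{1..n}. \<forall>j\<in>{1..n}. i \<le> j \<longrightarrow> x i \<le> x j \<and> y i \<le> y j"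
    and perm: "\<sigma> permutes {1..n}"
  have xr: "\<And>l. l \<in> {1..n} \<Longrightarrow> x l \<in> {0..1}" "\<And>l. l \<in> {1..n} \<Longrightarrow> y l \<in> {0..1}"
    using XY by auto
  have e1: "bigop oplus (\<lambda>i. otimes (x (n + 1 - i)) (y i)) n = H.F (\<lambda>i. otimes (x (n + 1 - i)) (y i)) {1..n}"
  proof (rule bigop_HF[OF n])
    fix i assume "i \<in> {1..n}"
    then have "n + 1 - i \<in> {1..n}" by auto
    then show "otimes (x (n + 1 - i)) (y i) \<in> {0..1}"
      using xr uninormD(1)[OF U1] \<open>i \<in> {1..n}\<close> by blast
  qed
  have e2: "bigop oplus (\<lambda>i. otimes (x (\<sigma> i)) (y i)) n = H.F (\<lambda>i. otimes (x (\<sigma> i)) (y i)) {1..n}"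
    by (rule bigop_HF[OF n]) (use xr uninormD(1)[OF U1] permutes_in_image[OF perm] in auto)
  have e3: "bigop oplus (\<lambda>i. otimes (x i) (y i)) n = H.F (\<lambda>i. otimes (x i) (y i)) {1..n}"
    by (rule bigop_HF[OF n]) (use xr uninormD(1)[OF U1] in auto)
  show "bigop oplus (\<lambda>i. otimes (x (n + 1 - i)) (y i)) n \<le> bigop oplus (\<lambda>i. otimes (x (\<sigma> i)) (y i)) n \<and>
        bigop oplus (\<lambda>i. otimes (x (\<sigma> i)) (y i)) n \<le> bigop oplus (\<lambda>i. otimes (x i) (y i)) n"
    unfolding e1 e2 e3
    using lower_aux[OF XY MON, of n \<sigma>] upper_aux[OF XY MON, of n \<sigma>] perm by auto
qed

end

theorem theorem6:
  fixes otimes oplus :: "real \<Rightarrow> real \<Rightarrow> real"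
  assumes "uninorm otimes" and "uninorm oplus"
    and "property_B otimes" and "property_A' oplus"
  shows "rearrangement_ineq otimes oplus"
proof -
  interpret RI otimes oplus using assms by (rule RI.intro)
  show ?thesis by (rule main)
qed

end
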